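(* Let $G$ be a finite group and $\mathcal{P}$ a prime ideal of $\mathrm{Gh}(\underline{A}_G)$. For each $H\le G$ write $\mathcal{P}(G/H)=\widetilde{A}(H)\cap\prod_{I\le H}n_{I,H}\mathbb{Z}$ with integers $n_{I,H}\ge0$. Then for all $I\le H\le G$, $n_{I,H}=n_{I,G}$.
   Context: For $H\le G$, $\widetilde{A}(H)$ is the subring of $\prod_{I\le H}\mathbb{Z}$ of tuples $(a_I)_{I\le H}$ with $a_{hIh^{-1}}=a_I$ for $h\in H$; every ideal of $\widetilde{A}(H)$ is of the form $\widetilde{A}(H)\cap\prod_{I\le H}n_I\mathbb{Z}$ with unique $n_I\ge0$ constant on $H$-conjugacy classes. $\mathrm{Gh}(\underline{A}_G)$ is the $G$-Tambara functor with $\mathrm{Gh}(\underline{A}_G)(G/H)=\widetilde{A}(H)$ and, for $H\le K$, $g\in G$, $I^g=g^{-1}Ig$: $\mathrm{res}^K_H(b)_L=b_L$; $\mathrm{tr}^K_H(a)_I=\sum_{kH\in K/H,\ I^k\le H}a_{I^k}$; $\mathrm{nm}^K_H(a)_I=\prod_{IgH\in I\backslash K/H}a_{I^g\cap H}$; $c_{g,H}(a)_J=a_{J^g}$ for $J\le gHg^{-1}$. A Tambara ideal is a collection of ideals $\mathcal{I}(G/H)$ closed under all restrictions, transfers, norms and conjugations; it is prime (Nakaoka) if it is not everything and whenever $a\in T(G/K_1)$, $b\in T(G/K_2)$ satisfy $\big(\mathrm{nm}^L_{g_1H_1g_1^{-1}}c_{g_1,H_1}\mathrm{res}^{K_1}_{H_1}(a)\big)\big(\mathrm{nm}^L_{g_2H_2g_2^{-1}}c_{g_2,H_2}\mathrm{res}^{K_2}_{H_2}(b)\big)\in\mathcal{I}(G/L)$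 for all $L,H_1,H_2\le G$, $g_1,g_2\in G$ with $H_i\le K_i$, $g_iH_ig_i^{-1}\le L$, then $a\in\mathcal{I}(G/K_1)$ or $b\in\mathcal{I}(G/K_2)$. *)

theory Defs
  imports "HOL-Algebra.Coset"
begin

(* Subgroups I of G are represented as subsets with subgroup I G; "I <= H" is
   subgroup I G \<and> I \<subseteq> H.  Elements of A~(H) are functions on subsets of G,
   vanishing off the subgroups of H and invariant under H-conjugation. *)

definition conjsub :: "('a,'b) monoid_scheme \<Rightarrow> 'a set \<Rightarrow> 'a \<Rightarrow> 'a set" where
  "conjsub G I g = {inv\<^bsub>G\<^esub> g \<otimes>\<^bsub>G\<^esub> x \<otimes>\<^bsub>G\<^esub> g | x. x \<in> I}"

definition ghost :: "('a,'b) monoid_scheme \<Rightarrow> 'a set \<Rightarrow> ('a set \<Rightarrow> int) set" where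
  "ghost G H = {a. (\<forall>I. \<not> (subgroup I G \<and> I \<subseteq> H) \<longrightarrow> a I = 0) \<and>
      (\<forall>I h. subgroup I G \<and> I \<subseteq> H \<and> h \<in> H \<longrightarrow> a (conjsub G I h) = a I)}"

definition res :: "('a,'b) monoid_scheme \<Rightarrow> 'a set \<Rightarrow> 'a set \<Rightarrow> ('a set \<Rightarrow> int) \<Rightarrow> ('a set \<Rightarrow> int)" where
  "res G K H b = (\<lambda>L. if subgroup L G \<and> L \<subseteq> H then b L else 0)"

definition tr :: "('a,'b) monoid_scheme \<Rightarrow> 'a set \<Rightarrow> 'a set \<Rightarrow> ('a set \<Rightarrow> int) \<Rightarrow> ('a set \<Rightarrow> int)" where
  "tr G K H a = (\<lambda>I. if subgroup I G \<and> I \<subseteq> K then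
      (\<Sum>C \<in> {k <#\<^bsub>G\<^esub> H | k. k \<in> K}.
         (let k = (SOME k. k \<in> C) in
            if conjsub G I k \<subseteq> H then a (conjsub G I k) else 0))
    else 0)"

definition nm :: "('a,'b) monoid_scheme \<Rightarrow> 'a set \<Rightarrow> 'a set \<Rightarrow> ('a set \<Rightarrow> int) \<Rightarrow> ('a set \<Rightarrow> int)" where
  "nm G K H a = (\<lambda>I. if subgroup I G \<and> I \<subseteq> K then
      (\<Prod>D \<in> {I <#>\<^bsub>G\<^esub> (g <#\<^bsub>G\<^esub> H) | g. g \<in> K}.
         a (conjsub G I (SOME g. g \<in> D) \<inter> H))
    else 0)"

definition cnj :: "('a,'b) monoid_scheme \<Rightarrow> 'a \<Rightarrow> 'a set \<Rightarrow> ('a set \<Rightarrow> int) \<Rightarrow> ('a set \<Rightarrow> int)" where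
  "cnj G g H a = (\<lambda>J. if subgroup J G \<and> J \<subseteq> conjsub G H (inv\<^bsub>G\<^esub> g)
      then a (conjsub G J g) else 0)"

definition ghost_ideal :: "('a,'b) monoid_scheme \<Rightarrow> 'a set \<Rightarrow> ('a set \<Rightarrow> int) set \<Rightarrow> bool" where
  "ghost_ideal G H P \<longleftrightarrow> P \<subseteq> ghost G H \<and> (\<lambda>I. 0) \<in> P \<and>
     (\<forall>a\<in>P. \<forall>b\<in>P. (\<lambda>I. a I + b I) \<in> P) \<and>
     (\<forall>a\<in>P. (\<lambda>I. - a I) \<in> P) \<and>
     (\<forall>r\<in>ghost G H. \<forall>a\<in>P. (\<lambda>I. r I * a I) \<in> P)"

definition tambara_ideal :: "('a,'b) monoid_scheme \<Rightarrow> ('a set \<Rightarrow> ('a set \<Rightarrow> int) set) \<Rightarrow> bool" where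
  "tambara_ideal G \<I> \<longleftrightarrow>
     (\<forall>H. subgroup H G \<longrightarrow> ghost_ideal G H (\<I> H)) \<and>
     (\<forall>K H b. subgroup K G \<and> subgroup H G \<and> H \<subseteq> K \<and> b \<in> \<I> K \<longrightarrow> res G K H b \<in> \<I> H) \<and>
     (\<forall>K H a. subgroup K G \<and> subgroup H G \<and> H \<subseteq> K \<and> a \<in> \<I> H \<longrightarrow> tr G K H a \<in> \<I> K) \<and>
     (\<forall>K H a. subgroup K G \<and> subgroup H G \<and> H \<subseteq> K \<and> a \<in> \<I> H \<longrightarrow> nm G K H a \<in> \<I> K) \<and>
     (\<forall>H g a. subgroup H G \<and> g \<in> carrier G \<and> a \<in> \<I> H \<longrightarrow>
         cnj G g H a \<in> \<I> (conjsub G H (inv\<^bsub>G\<^esub> g)))"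

(* prime in the sense of Nakaoka *)
definition prime_tambara_ideal :: "('a,'b) monoid_scheme \<Rightarrow> ('a set \<Rightarrow> ('a set \<Rightarrow> int) set) \<Rightarrow> bool" where
  "prime_tambara_ideal G \<I> \<longleftrightarrow> tambara_ideal G \<I> \<and>
     (\<exists>H. subgroup H G \<and> \<I> H \<noteq> ghost G H) \<and>
     (\<forall>K1 K2 a b. subgroup K1 G \<and> subgroup K2 G \<and> a \<in> ghost G K1 \<and> b \<in> ghost G K2 \<and>
        (\<forall>L H1 H2 g1 g2. subgroup L G \<and> subgroup H1 G \<and> subgroup H2 G \<and>
            H1 \<subseteq> K1 \<and> H2 \<subseteq> K2 \<and> g1 \<in> carrier G \<and> g2 \<in> carrier G \<and>
            conjsub G H1 (inv\<^bsub>G\<^esub> g1) \<subseteq> L \<and> conjsub G H2 (inv\<^bsub>G\<^esub> g2) \<subseteq> L \<longrightarrow>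
            (\<lambda>I. nm G L (conjsub G H1 (inv\<^bsub>G\<^esub> g1)) (cnj G g1 H1 (res G K1 H1 a)) I *
                 nm G L (conjsub G H2 (inv\<^bsub>G\<^esub> g2)) (cnj G g2 H2 (res G K2 H2 b)) I) \<in> \<I> L)
        \<longrightarrow> a \<in> \<I> K1 \<or> b \<in> \<I> K2)"

end

theory Submission
  imports Defs
begin

context group begin

lemma h1: "a \<in> carrier G \<Longrightarrow> g \<in> carrier G \<Longrightarrow> a \<otimes> g \<otimes> inv g = a" by (simp add: m_assoc)
lemma h2: "a \<in> carrier G \<Longrightarrow> g \<in> carrier G \<Longrightarrow> a \<otimes> inv g \<otimes> g = a" by (simp add: m_assoc)
lemma t1: "x \<in> carrier G \<Longrightarrow> g \<in> carrier G \<Longrightarrow> inv (inv g \<otimes> x \<otimes> g) = inv g \<otimes> inv x \<otimes> g"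
  by (simp add: inv_mult_group m_assoc)
lemma t2: "x \<in> carrier G \<Longrightarrow> y \<in> carrier G \<Longrightarrow> g \<in> carrier G \<Longrightarrow> (inv g \<otimes> x \<otimes> g) \<otimes> (inv g \<otimes> y \<otimes> g) = inv g \<otimes> (x \<otimes> y) \<otimes> g"
  by (simp add: m_assoc[symmetric] h1)
lemma t3: "x \<in> carrier G \<Longrightarrow> a \<in> carrier G \<Longrightarrow> b \<in> carrier G \<Longrightarrow> inv b \<otimes> (inv a \<otimes> x \<otimes> a) \<otimes> b = inv (a \<otimes> b) \<otimes> x \<otimes> (a \<otimes> b)"
  by (simp add: m_assoc inv_mult_group)
lemma t4: "x \<in> carrier G \<Longrightarrow> g \<in> carrier G \<Longrightarrow> x = inv g \<otimes> (g \<otimes> x \<otimes> inv g) \<otimes> g"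
  by (simp add: m_assoc[symmetric] h2)

lemma conjsub_sub: "I \<subseteq> carrier G \<Longrightarrow> g \<in> carrier G \<Longrightarrow> conjsub G I g \<subseteq> carrier G"
  unfolding conjsub_def by auto

lemma conjsub_subgroup:
  assumes "subgroup I G" "g \<in> carrier G" shows "subgroup (conjsub G I g) G"
proof (rule subgroupI)
  have IC: "I \<subseteq> carrier G" using assms subgroup.subset by blast
  show "conjsub G I g \<subseteq> carrier G" using conjsub_sub IC assms by blast
  show "conjsub G I g \<noteq> {}" unfolding conjsub_def using subgroup.one_closed[OF assms(1)] by blast
next
  have IC: "I \<subseteq> carrier G" using assms subgroup.subset by blast
  fix a assume "a \<in> conjsub G I g"
  then obtain x where x: "x \<in> I" "a = inv g \<otimes> x \<otimes> g" unfolding conjsub_def by blast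
  have xc: "x \<in> carrier G" using x IC by blast
  have "inv a = inv g \<otimes> inv x \<otimes> g" unfolding x(2) by (rule t1[OF xc assms(2)])
  moreover have "inv x \<in> I" using x(1) by (rule subgroup.m_inv_closed[OF assms(1)])
  ultimately show "inv a \<in> conjsub G I g" unfolding conjsub_def by blast
next
  have IC: "I \<subseteq> carrier G" using assms subgroup.subset by blast
  fix a b assume "a \<in> conjsub G I g" "b \<in> conjsub G I g"
  then obtain x y where x: "x \<in> I" "a = inv g \<otimes> x \<otimes> g" and y: "y \<in> I" "b = inv g \<otimes> y \<otimes> g" unfolding conjsub_def by blast
  have xc: "x \<in> carrier G" "y \<in> carrier G" using x y IC by blast+
  have "a \<otimes> b = inv g \<otimes> (x \<otimes> y) \<otimes> g" unfolding x(2) y(2) by (rule t2[OF xc assms(2)])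
  moreover have "x \<otimes> y \<in> I" using x(1) y(1) by (rule subgroup.m_closed[OF assms(1)])
  ultimately show "a \<otimes> b \<in> conjsub G I g" unfolding conjsub_def by blast
qed

lemma conjsub_conjsub:
  assumes "I \<subseteq> carrier G" "a \<in> carrier G" "b \<in> carrier G"
  shows "conjsub G (conjsub G I a) b = conjsub G I (a \<otimes> b)"
proof -
  have e: "\<And>x. x \<in> I \<Longrightarrow> inv b \<otimes> (inv a \<otimes> x \<otimes> a) \<otimes> b = inv (a \<otimes> b) \<otimes> x \<otimes> (a \<otimes> b)"
    using t3 assms by blast
  show ?thesis unfolding conjsub_def
  proof (intro equalityI subsetI)
    fix z assume "z \<in> {inv b \<otimes> y \<otimes> b |y. y \<in> {inv a \<otimes> x \<otimes> a |x. x \<in> I}}"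
    then obtain x where "x \<in> I" "z = inv b \<otimes> (inv a \<otimes> x \<otimes> a) \<otimes> b" by blast
    then show "z \<in> {inv (a \<otimes> b) \<otimes> x \<otimes> (a \<otimes> b) |x. x \<in> I}" using e by blast
  next
    fix z assume "z \<in> {inv (a \<otimes> b) \<otimes> x \<otimes> (a \<otimes> b) |x. x \<in> I}"
    then obtain x where x: "x \<in> I" "z = inv (a \<otimes> b) \<otimes> x \<otimes> (a \<otimes> b)" by blast
    have "z = inv b \<otimes> (inv a \<otimes> x \<otimes> a) \<otimes> b" using x e by simp
    moreover have "inv a \<otimes> x \<otimes> a \<in> {inv a \<otimes> x \<otimes> a |x. x \<in> I}" using x(1) by blast
    ultimately show "z \<in> {inv b \<otimes> y \<otimes> b |y. y \<in> {inv a \<otimes> x \<otimes> a |x. x \<in> I}}" by blast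
  qed
qed

lemma conjsub_one: "I \<subseteq> carrier G \<Longrightarrow> conjsub G I \<one> = I"
  unfolding conjsub_def by force

lemma conjsub_inv:
  assumes "I \<subseteq> carrier G" "a \<in> carrier G"
  shows "conjsub G (conjsub G I a) (inv a) = I"
  using conjsub_conjsub[OF assms inv_closed[OF assms(2)]] assms conjsub_one by simp

lemma conjsub_mono: "I \<subseteq> J \<Longrightarrow> conjsub G I g \<subseteq> conjsub G J g"
  unfolding conjsub_def by blast

lemma conjsub_in_sub:
  assumes "subgroup H G" "I \<subseteq> H" "h \<in> H"
  shows "conjsub G I h \<subseteq> H"
  unfolding conjsub_def using assms
  by (auto intro!: subgroup.m_closed subgroup.m_inv_closed)

lemma conjsub_self:
  assumes "subgroup I G" "h \<in> I"
  shows "conjsub G I h = I"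
proof -
  have IC: "I \<subseteq> carrier G" using assms subgroup.subset by blast
  have hc: "h \<in> carrier G" using assms IC by blast
  have 1: "conjsub G I h \<subseteq> I" using conjsub_in_sub[OF assms(1) _ assms(2)] by blast
  have "conjsub G I (inv h) \<subseteq> I" using conjsub_in_sub[OF assms(1) _ subgroup.m_inv_closed[OF assms]] by blast
  then have "conjsub G (conjsub G I (inv h)) h \<subseteq> conjsub G I h" by (rule conjsub_mono)
  moreover have "conjsub G (conjsub G I (inv h)) h = I"
    using conjsub_inv[OF IC inv_closed[OF hc]] hc by simp
  ultimately show ?thesis using 1 by blast
qed

end

lemma sq_eq_nonneg: "(a::int) \<ge> 0 \<Longrightarrow> b \<ge> 0 \<Longrightarrow> a * a = b * b \<Longrightarrow> a = b"
  using power2_eq_iff_nonneg[of a b] by (simp add: power2_eq_square)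

lemma dvd_sq_mult: "(n::int) dvd a * a \<Longrightarrow> n dvd b * b \<Longrightarrow> n dvd a * b"
proof -
  assume "n dvd a * a" "n dvd b * b"
  then have "n * n dvd (a*a) * (b*b)" by (rule mult_dvd_mono)
  then have "n ^ 2 dvd (a*b) ^ 2" by (simp add: power2_eq_square algebra_simps)
  then show ?thesis using pow_divides_pow_iff[of 2] by simp
qed

lemma nm_mult: "nm G L H' (\<lambda>J. w J * w J) = (\<lambda>J. nm G L H' w J * nm G L H' w J)"
  by (simp add: nm_def prod.distrib fun_eq_iff)

lemma cr_mult: "cnj G g H (res G K H (\<lambda>J. z J * z J)) =
   (\<lambda>J. cnj G g H (res G K H z) J * cnj G g H (res G K H z) J)"
  by (simp add: cnj_def res_def fun_eq_iff)

lemma T_mult: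
  "nm G L H' (cnj G g H (res G K H (\<lambda>J. z J * z J))) =
   (\<lambda>J. nm G L H' (cnj G g H (res G K H z)) J * nm G L H' (cnj G g H (res G K H z)) J)"
  unfolding cr_mult nm_mult ..

lemma T_nonneg:
  assumes "\<forall>J. z J \<ge> (0::int)"
  shows "nm G L H' (cnj G g H (res G K H z)) J \<ge> 0"
  using assms by (auto simp: nm_def cnj_def res_def intro!: prod_nonneg)

lemma tam_res: "tambara_ideal G P \<Longrightarrow> subgroup K G \<Longrightarrow> subgroup H G \<Longrightarrow> H \<subseteq> K \<Longrightarrow> b \<in> P K \<Longrightarrow> res G K H b \<in> P H"
  unfolding tambara_ideal_def by blast
lemma tam_tr: "tambara_ideal G P \<Longrightarrow> subgroup K G \<Longrightarrow> subgroup H G \<Longrightarrow> H \<subseteq> K \<Longrightarrow> a \<in> P H \<Longrightarrow> tr G K H a \<in> P K"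
  unfolding tambara_ideal_def by blast
lemma tam_nm: "tambara_ideal G P \<Longrightarrow> subgroup K G \<Longrightarrow> subgroup H G \<Longrightarrow> H \<subseteq> K \<Longrightarrow> a \<in> P H \<Longrightarrow> nm G K H a \<in> P K"
  unfolding tambara_ideal_def by blast
lemma tam_cnj: "tambara_ideal G P \<Longrightarrow> subgroup H G \<Longrightarrow> g \<in> carrier G \<Longrightarrow> a \<in> P H \<Longrightarrow> cnj G g H a \<in> P (conjsub G H (inv\<^bsub>G\<^esub> g))"
  unfolding tambara_ideal_def by blast

lemma prime_rule:
  assumes "prime_tambara_ideal G P" "subgroup K1 G" "subgroup K2 G" "a \<in> ghost G K1" "b \<in> ghost G K2"
    "\<And>L H1 H2 g1 g2. subgroup L G \<Longrightarrow> subgroup H1 G \<Longrightarrow> subgroup H2 G \<Longrightarrow>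
            H1 \<subseteq> K1 \<Longrightarrow> H2 \<subseteq> K2 \<Longrightarrow> g1 \<in> carrier G \<Longrightarrow> g2 \<in> carrier G \<Longrightarrow>
            conjsub G H1 (inv\<^bsub>G\<^esub> g1) \<subseteq> L \<Longrightarrow> conjsub G H2 (inv\<^bsub>G\<^esub> g2) \<subseteq> L \<Longrightarrow>
            (\<lambda>I. nm G L (conjsub G H1 (inv\<^bsub>G\<^esub> g1)) (cnj G g1 H1 (res G K1 H1 a)) I *
                 nm G L (conjsub G H2 (inv\<^bsub>G\<^esub> g2)) (cnj G g2 H2 (res G K2 H2 b)) I) \<in> P L"
  shows "a \<in> P K1 \<or> b \<in> P K2"
proof -
  have R: "\<forall>K1 K2 a b. subgroup K1 G \<and> subgroup K2 G \<and> a \<in> ghost G K1 \<and> b \<in> ghost G K2 \<and>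
        (\<forall>L H1 H2 g1 g2. subgroup L G \<and> subgroup H1 G \<and> subgroup H2 G \<and>
            H1 \<subseteq> K1 \<and> H2 \<subseteq> K2 \<and> g1 \<in> carrier G \<and> g2 \<in> carrier G \<and>
            conjsub G H1 (inv\<^bsub>G\<^esub> g1) \<subseteq> L \<and> conjsub G H2 (inv\<^bsub>G\<^esub> g2) \<subseteq> L \<longrightarrow>
            (\<lambda>I. nm G L (conjsub G H1 (inv\<^bsub>G\<^esub> g1)) (cnj G g1 H1 (res G K1 H1 a)) I *
                 nm G L (conjsub G H2 (inv\<^bsub>G\<^esub> g2)) (cnj G g2 H2 (res G K2 H2 b)) I) \<in> P L)
        \<longrightarrow> a \<in> P K1 \<or> b \<in> P K2"
    using assms(1) unfolding prime_tambara_ideal_def by (elim conjE)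
  show ?thesis
    apply (rule mp[OF spec[OF spec[OF spec[OF spec[OF R, of K1], of K2], of a], of b]])
    apply (intro conjI assms(2-5) allI impI)
    apply (elim conjE)
    apply (rule assms(6); assumption)
    done
qed

lemma prime_sq:
  fixes G :: "('a,'b) monoid_scheme" and P :: "'a set \<Rightarrow> ('a set \<Rightarrow> int) set"
    and n :: "'a set \<Rightarrow> 'a set \<Rightarrow> int"
  assumes grp: "group G"
    and pr: "prime_tambara_ideal G P"
    and Pdef: "\<forall>H. subgroup H G \<longrightarrow>
            P H = {a \<in> ghost G H. \<forall>I. subgroup I G \<and> I \<subseteq> H \<longrightarrow> n I H dvd a I}"
    and zg: "z \<in> ghost G (carrier G)" and zpos: "\<forall>J. z J \<ge> 0"
    and zz: "(\<lambda>J. z J * z J) \<in> P (carrier G)"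
  shows "z \<in> P (carrier G)"
proof -
  have TI: "tambara_ideal G P" using pr unfolding prime_tambara_ideal_def by blast
  have cG: "subgroup (carrier G) G" using group.subgroup_self[OF grp] .
  have inP: "nm G L (conjsub G H (inv\<^bsub>G\<^esub> g)) (cnj G g H (res G (carrier G) H (\<lambda>J. z J * z J))) \<in> P L"
    if "subgroup L G" "subgroup H G" "g \<in> carrier G" "conjsub G H (inv\<^bsub>G\<^esub> g) \<subseteq> L" for L H g
  proof -
    have HC: "H \<subseteq> carrier G" using that subgroup.subset by blast
    have 1: "res G (carrier G) H (\<lambda>J. z J * z J) \<in> P H"
      using tam_res[OF TI cG that(2) HC zz] .
    have 2: "cnj G g H (res G (carrier G) H (\<lambda>J. z J * z J)) \<in> P (conjsub G H (inv\<^bsub>G\<^esub> g))"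
      using tam_cnj[OF TI that(2,3) 1] .
    have 3: "subgroup (conjsub G H (inv\<^bsub>G\<^esub> g)) G"
      using group.conjsub_subgroup[OF grp that(2)] group.inv_closed[OF grp that(3)] by blast
    show ?thesis using tam_nm[OF TI that(1) 3 that(4) 2] .
  qed
  have key: "(\<lambda>I. nm G L (conjsub G H1 (inv\<^bsub>G\<^esub> g1)) (cnj G g1 H1 (res G (carrier G) H1 z)) I *
                 nm G L (conjsub G H2 (inv\<^bsub>G\<^esub> g2)) (cnj G g2 H2 (res G (carrier G) H2 z)) I) \<in> P L"
    if "subgroup L G" "subgroup H1 G" "subgroup H2 G" "g1 \<in> carrier G" "g2 \<in> carrier G"
       "conjsub G H1 (inv\<^bsub>G\<^esub> g1) \<subseteq> L" "conjsub G H2 (inv\<^bsub>G\<^esub> g2) \<subseteq> L" for L H1 H2 g1 g2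
  proof -
    define u where "u = nm G L (conjsub G H1 (inv\<^bsub>G\<^esub> g1)) (cnj G g1 H1 (res G (carrier G) H1 z))"
    define v where "v = nm G L (conjsub G H2 (inv\<^bsub>G\<^esub> g2)) (cnj G g2 H2 (res G (carrier G) H2 z))"
    have uu: "(\<lambda>J. u J * u J) \<in> P L" using inP[OF that(1,2,4,6)] unfolding T_mult u_def .
    have vv: "(\<lambda>J. v J * v J) \<in> P L" using inP[OF that(1,3,5,7)] unfolding T_mult v_def .
    have up: "\<forall>J. u J \<ge> 0" unfolding u_def using T_nonneg[OF zpos] by blast
    have vp: "\<forall>J. v J \<ge> 0" unfolding v_def using T_nonneg[OF zpos] by blast
    have PL: "P L = {a \<in> ghost G L. \<forall>I. subgroup I G \<and> I \<subseteq> L \<longrightarrow> n I L dvd a I}"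
      using Pdef that(1) by blast
    have ug: "(\<lambda>J. u J * u J) \<in> ghost G L" and vg: "(\<lambda>J. v J * v J) \<in> ghost G L"
      using uu vv PL by auto
    have "(\<lambda>J. u J * v J) \<in> ghost G L"
      unfolding ghost_def
    proof (intro CollectI conjI allI impI)
      fix I assume "\<not> (subgroup I G \<and> I \<subseteq> L)"
      then have "u I * u I = 0" using ug unfolding ghost_def by blast
      then show "u I * v I = 0" by simp
    next
      fix I h assume a: "subgroup I G \<and> I \<subseteq> L \<and> h \<in> L"
      have "u (conjsub G I h) = u I"
      proof -
        have "u (conjsub G I h) * u (conjsub G I h) = u I * u I" using ug a unfolding ghost_def by blast
      then show "u (conjsub G I h) = u I" by (rule sq_eq_nonneg[OF up[rule_format] up[rule_format]])
      qed
      moreover have "v (conjsub G I h) = v I"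
      proof -
        have "v (conjsub G I h) * v (conjsub G I h) = v I * v I" using vg a unfolding ghost_def by blast
      then show "v (conjsub G I h) = v I" by (rule sq_eq_nonneg[OF vp[rule_format] vp[rule_format]])
      qed
      ultimately show "u (conjsub G I h) * v (conjsub G I h) = u I * v I" by simp
    qed
    moreover have "\<forall>I. subgroup I G \<and> I \<subseteq> L \<longrightarrow> n I L dvd u I * v I"
    proof (intro allI impI)
      fix I assume aI: "subgroup I G \<and> I \<subseteq> L"
      have "n I L dvd u I * u I" using uu aI unfolding PL by blast
      moreover have "n I L dvd v I * v I" using vv aI unfolding PL by blast
      ultimately show "n I L dvd u I * v I" by (rule dvd_sq_mult)
    qed
    ultimately have "(\<lambda>J. u J * v J) \<in> P L" using PL by blast
    then show ?thesis unfolding u_def v_def .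
  qed
  have "z \<in> P (carrier G) \<or> z \<in> P (carrier G)"
  proof (rule prime_rule[OF pr cG cG zg zg])
    fix L H1 H2 g1 g2
    assume a: "subgroup L G" "subgroup H1 G" "subgroup H2 G" "H1 \<subseteq> carrier G" "H2 \<subseteq> carrier G"
      "g1 \<in> carrier G" "g2 \<in> carrier G" "conjsub G H1 (inv\<^bsub>G\<^esub> g1) \<subseteq> L"
      "conjsub G H2 (inv\<^bsub>G\<^esub> g2) \<subseteq> L"
    show "(\<lambda>I. nm G L (conjsub G H1 (inv\<^bsub>G\<^esub> g1)) (cnj G g1 H1 (res G (carrier G) H1 z)) I *
                 nm G L (conjsub G H2 (inv\<^bsub>G\<^esub> g2)) (cnj G g2 H2 (res G (carrier G) H2 z)) I) \<in> P L"
      by (rule key[OF a(1,2,3,6,7,8,9)])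
  qed
  then show ?thesis by blast
qed


definition cls :: "('a,'b) monoid_scheme \<Rightarrow> 'a set \<Rightarrow> 'a set \<Rightarrow> 'a set \<Rightarrow> int" where
  "cls G K I J = (if subgroup J G \<and> J \<subseteq> K \<and> (\<exists>k\<in>K. J = conjsub G I k) then 1 else 0)"

context group begin

lemma normz_subgroup:
  assumes "subgroup I G" shows "subgroup {g \<in> carrier G. conjsub G I g = I} G"
proof (rule subgroupI)
  have IC: "I \<subseteq> carrier G" using assms subgroup.subset by blast
  show "{g \<in> carrier G. conjsub G I g = I} \<subseteq> carrier G" by blast
  show "{g \<in> carrier G. conjsub G I g = I} \<noteq> {}" using conjsub_one[OF IC] by blast
  fix a assume "a \<in> {g \<in> carrier G. conjsub G I g = I}"
  then have a: "a \<in> carrier G" "conjsub G I a = I" by auto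
  have "conjsub G I (inv a) = I" using conjsub_inv[OF IC a(1)] a(2) by simp
  then show "inv a \<in> {g \<in> carrier G. conjsub G I g = I}" using a by simp
next
  have IC: "I \<subseteq> carrier G" using assms subgroup.subset by blast
  fix a b assume "a \<in> {g \<in> carrier G. conjsub G I g = I}" "b \<in> {g \<in> carrier G. conjsub G I g = I}"
  then have a: "a \<in> carrier G" "conjsub G I a = I" "b \<in> carrier G" "conjsub G I b = I" by auto
  have "conjsub G I (a \<otimes> b) = I" using conjsub_conjsub[OF IC a(1) a(3)] a by simp
  then show "a \<otimes> b \<in> {g \<in> carrier G. conjsub G I g = I}" using a by simp
qed

lemma normz_sup:
  assumes "subgroup I G" shows "I \<subseteq> {g \<in> carrier G. conjsub G I g = I}"
  using conjsub_self[OF assms] assms subgroup.subset by blast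

lemma cls_inv:
  assumes K: "subgroup K G" and IK: "I \<subseteq> K" and J: "subgroup J G" "J \<subseteq> K" and h: "h \<in> K"
  shows "cls G K I (conjsub G J h) = cls G K I J"
proof -
  have KC: "K \<subseteq> carrier G" using K subgroup.subset by blast
  have hc: "h \<in> carrier G" using h KC by blast
  have IC: "I \<subseteq> carrier G" using IK KC by blast
  have JC: "J \<subseteq> carrier G" using J KC by blast
  have s: "subgroup (conjsub G J h) G" by (rule conjsub_subgroup[OF J(1) hc])
  have sK: "conjsub G J h \<subseteq> K" by (rule conjsub_in_sub[OF K J(2) h])
  have "(\<exists>k\<in>K. conjsub G J h = conjsub G I k) \<longleftrightarrow> (\<exists>k\<in>K. J = conjsub G I k)"
  proof
    assume "\<exists>k\<in>K. conjsub G J h = conjsub G I k"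
    then obtain k where k: "k \<in> K" "conjsub G J h = conjsub G I k" by blast
    have kc: "k \<in> carrier G" using k KC by blast
    have "J = conjsub G (conjsub G J h) (inv h)" using conjsub_inv[OF JC hc] by simp
    also have "\<dots> = conjsub G I (k \<otimes> inv h)" using k(2) conjsub_conjsub[OF IC kc inv_closed[OF hc]] by simp
    finally show "\<exists>k\<in>K. J = conjsub G I k"
      using k(1) h subgroup.m_closed[OF K] subgroup.m_inv_closed[OF K] by blast
  next
    assume "\<exists>k\<in>K. J = conjsub G I k"
    then obtain k where k: "k \<in> K" "J = conjsub G I k" by blast
    have kc: "k \<in> carrier G" using k KC by blast
    have "conjsub G J h = conjsub G I (k \<otimes> h)" using k(2) conjsub_conjsub[OF IC kc hc] by simp
    then show "\<exists>k\<in>K. conjsub G J h = conjsub G I k"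
      using k(1) h subgroup.m_closed[OF K] by blast
  qed
  then show ?thesis unfolding cls_def using s sK J by simp
qed

lemma cls_ghost:
  assumes K: "subgroup K G" and IK: "I \<subseteq> K"
  shows "(\<lambda>J. c * cls G K I J) \<in> ghost G K"
  unfolding ghost_def
proof (intro CollectI conjI allI impI)
  fix J assume "\<not> (subgroup J G \<and> J \<subseteq> K)"
  then show "c * cls G K I J = 0" unfolding cls_def by auto
next
  fix J h assume "subgroup J G \<and> J \<subseteq> K \<and> h \<in> K"
  then show "c * cls G K I (conjsub G J h) = c * cls G K I J"
    using cls_inv[OF K IK] by simp
qed

lemma cls_self:
  assumes K: "subgroup K G" and I: "subgroup I G" and IK: "I \<subseteq> K"
  shows "cls G K I I = 1"
proof -
  have IC: "I \<subseteq> carrier G" using I subgroup.subset by blast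
  have "\<one> \<in> K" using subgroup.one_closed[OF K] .
  then have "\<exists>k\<in>K. I = conjsub G I k" using conjsub_one[OF IC] by metis
  then have "subgroup I G \<and> I \<subseteq> K \<and> (\<exists>k\<in>K. I = conjsub G I k)" using I IK by blast
  then show ?thesis unfolding cls_def by (rule if_P)
qed

lemma lcos_self: assumes "subgroup M G" "k \<in> M" shows "k <# M = M"
proof
  show "k <# M \<subseteq> M"
  proof
    fix x assume "x \<in> k <# M"
    then obtain h where h: "h \<in> M" "x = k \<otimes> h" unfolding l_coset_def by blast
    show "x \<in> M" unfolding h(2) by (rule subgroup.m_closed[OF assms(1) assms(2) h(1)])
  qed
  show "M \<subseteq> k <# M"
  proof
    fix h assume h: "h \<in> M"
    have MC: "M \<subseteq> carrier G" using assms subgroup.subset by blast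
    have kc: "k \<in> carrier G" "h \<in> carrier G" using MC assms(2) h by blast+
    have "h = k \<otimes> (inv k \<otimes> h)" using kc by (simp add: m_assoc[symmetric])
    moreover have "inv k \<otimes> h \<in> M"
      by (rule subgroup.m_closed[OF assms(1) subgroup.m_inv_closed[OF assms] h])
    ultimately show "h \<in> k <# M" unfolding l_coset_def by blast
  qed
qed

end

lemma sq_cls: "cls G K I J * cls G K I J = cls G K I J"
  unfolding cls_def by simp

lemma cls_nonneg: "cls G K I J \<ge> 0"
  unfolding cls_def by simp


theorem proposition4p5:
  fixes G :: "('a,'b) monoid_scheme"
    and P :: "'a set \<Rightarrow> ('a set \<Rightarrow> int) set"
    and n :: "'a set \<Rightarrow> 'a set \<Rightarrow> int"
  assumes "group G" and "finite (carrier G)"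
    and "prime_tambara_ideal G P"
    and "\<forall>H I. subgroup H G \<and> subgroup I G \<and> I \<subseteq> H \<longrightarrow>
            n I H \<ge> 0 \<and> (\<forall>h\<in>H. n (conjsub G I h) H = n I H)"
    and "\<forall>H. subgroup H G \<longrightarrow>
            P H = {a \<in> ghost G H. \<forall>I. subgroup I G \<and> I \<subseteq> H \<longrightarrow> n I H dvd a I}"
  shows "\<forall>I H. subgroup H G \<and> subgroup I G \<and> I \<subseteq> H \<longrightarrow> n I H = n I (carrier G)"
proof (intro allI impI)
  fix I H assume IH: "subgroup H G \<and> subgroup I G \<and> I \<subseteq> H"
  have H: "subgroup H G" and I: "subgroup I G" and IsH: "I \<subseteq> H" using IH by auto
  interpret grp: group G by (rule assms(1))
  have TI: "tambara_ideal G P" using assms(3) unfolding prime_tambara_ideal_def by blast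
  note Pdef = assms(5)
  have cG: "subgroup (carrier G) G" by (rule grp.subgroup_self)
  have HC: "H \<subseteq> carrier G" using H subgroup.subset by blast
  have IC: "I \<subseteq> carrier G" using IsH HC by blast
  define N where "N = n I (carrier G)"
  define t where "t = n I I"
  define m where "m = n I H"
  have Pdvd: "n J K dvd a J" if "subgroup K G" "a \<in> P K" "subgroup J G" "J \<subseteq> K" for K a J
  proof -
    from Pdef that(1) have e: "P K = {a \<in> ghost G K. \<forall>I. subgroup I G \<and> I \<subseteq> K \<longrightarrow> n I K dvd a I}"
      by blast
    from that(2) have "a \<in> {a \<in> ghost G K. \<forall>I. subgroup I G \<and> I \<subseteq> K \<longrightarrow> n I K dvd a I}"
      unfolding e .
    then show ?thesis using that(3,4) by blast
  qed
  have Pin: "a \<in> P K" if "subgroup K G" "a \<in> ghost G K" "\<forall>J. subgroup J G \<and> J \<subseteq> K \<longrightarrow> n J K dvd a J" for K a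
  proof -
    from Pdef that(1) have e: "P K = {a \<in> ghost G K. \<forall>I. subgroup I G \<and> I \<subseteq> K \<longrightarrow> n I K dvd a I}"
      by blast
    show ?thesis unfolding e using that(2,3) by blast
  qed
  have nconj: "n (conjsub G I k) K = n I K" if "subgroup K G" "I \<subseteq> K" "k \<in> K" for K k
  proof -
    have "n I K \<ge> 0 \<and> (\<forall>h\<in>K. n (conjsub G I h) K = n I K)"
      using assms(4) that(1,2) I by blast
    then show ?thesis using that(3) by blast
  qed
  have tpos: "t \<ge> 0" unfolding t_def using assms(4) I by blast
  have clsP: "(\<lambda>J. c * cls G K I J) \<in> P K" if K: "subgroup K G" "I \<subseteq> K" "n I K dvd c" for K c
  proof (rule Pin[OF K(1) grp.cls_ghost[OF K(1,2)]], intro allI impI)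
    fix J assume J: "subgroup J G \<and> J \<subseteq> K"
    show "n J K dvd c * cls G K I J"
    proof (cases "\<exists>k\<in>K. J = conjsub G I k")
      case True
      then obtain k where k: "k \<in> K" "J = conjsub G I k" by blast
      have "n J K = n I K" unfolding k(2) by (rule nconj[OF K(1,2) k(1)])
      then have "n J K dvd c" using K(3) by simp
      then show ?thesis by (rule dvd_mult2)
    next
      case False
      then have "cls G K I J = 0" unfolding cls_def by auto
      then show ?thesis by simp
    qed
  qed
  have mN: "m dvd N"
  proof -
    have "(\<lambda>J. N * cls G (carrier G) I J) \<in> P (carrier G)" by (rule clsP[OF cG IC]) (simp add: N_def)
    then have "res G (carrier G) H (\<lambda>J. N * cls G (carrier G) I J) \<in> P H" by (rule tam_res[OF TI cG H HC])
    then have "n I H dvd res G (carrier G) H (\<lambda>J. N * cls G (carrier G) I J) I" by (rule Pdvd[OF H _ I IsH])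
    moreover have "res G (carrier G) H (\<lambda>J. N * cls G (carrier G) I J) I = N"
      unfolding res_def using I IsH grp.cls_self[OF cG I IC] by simp
    ultimately show ?thesis unfolding m_def by simp
  qed
  have tm: "t dvd m"
  proof -
    have "(\<lambda>J. m * cls G H I J) \<in> P H" by (rule clsP[OF H IsH]) (simp add: m_def)
    then have "res G H I (\<lambda>J. m * cls G H I J) \<in> P I" by (rule tam_res[OF TI H I IsH])
    then have "n I I dvd res G H I (\<lambda>J. m * cls G H I J) I" by (rule Pdvd[OF I _ I subset_refl])
    moreover have "res G H I (\<lambda>J. m * cls G H I J) I = m"
      unfolding res_def using I grp.cls_self[OF H I IsH] by simp
    ultimately show ?thesis unfolding t_def by simp
  qed
  have rad: "N dvd c" if "c \<ge> 0" "N dvd c * c" for c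
  proof -
    let ?z = "\<lambda>J. c * cls G (carrier G) I J"
    have zg: "?z \<in> ghost G (carrier G)" by (rule grp.cls_ghost[OF cG IC])
    have zpos: "\<forall>J. ?z J \<ge> 0" using mult_nonneg_nonneg[OF that(1) cls_nonneg] by blast
    have e: "(\<lambda>J. ?z J * ?z J) = (\<lambda>J. (c * c) * cls G (carrier G) I J)"
      by (auto simp: fun_eq_iff cls_def)
    have "(\<lambda>J. (c * c) * cls G (carrier G) I J) \<in> P (carrier G)"
      by (rule clsP[OF cG IC]) (use that(2) in \<open>simp add: N_def\<close>)
    then have zz: "(\<lambda>J. ?z J * ?z J) \<in> P (carrier G)" unfolding e .
    have "?z \<in> P (carrier G)" by (rule prime_sq[OF assms(1) assms(3) Pdef zg zpos zz])
    then have "n I (carrier G) dvd ?z I" by (rule Pdvd[OF cG _ I IC])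
    then show ?thesis using grp.cls_self[OF cG I IC] by (simp add: N_def)
  qed
  have pw: "N dvd t" if "N dvd t ^ (2 ^ k)" for k
    using that
  proof (induction k)
    case 0
    then show ?case by simp
  next
    case (Suc k)
    have e: "t ^ (2 ^ Suc k) = t ^ (2 ^ k) * t ^ (2 ^ k)" by (simp add: mult_2 power_add)
    have "N dvd t ^ (2 ^ k) * t ^ (2 ^ k)" using Suc.prems unfolding e .
    then have "N dvd t ^ (2 ^ k)" by (rule rad[OF zero_le_power[OF tpos]])
    then show ?case by (rule Suc.IH)
  qed
  define M where "M = {g \<in> carrier G. conjsub G I g = I}"
  have M: "subgroup M G" using grp.normz_subgroup[OF I] unfolding M_def .
  have IM: "I \<subseteq> M" using grp.normz_sup[OF I] unfolding M_def .
  have MC: "M \<subseteq> carrier G" unfolding M_def by blast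
  have inM: "conjsub G I g = I" if "g \<in> M" for g using that unfolding M_def by blast
  define mM where "mM = n I M"
  define a where "a = (\<lambda>J. if J = I then mM else 0)"
  have aP: "a \<in> P M"
  proof (rule Pin[OF M])
    show "a \<in> ghost G M" unfolding ghost_def
    proof (intro CollectI conjI allI impI)
      fix J assume "\<not> (subgroup J G \<and> J \<subseteq> M)"
      then show "a J = 0" unfolding a_def using I IM by auto
    next
      fix J h assume Jh: "subgroup J G \<and> J \<subseteq> M \<and> h \<in> M"
      have hc: "h \<in> carrier G" using Jh MC by blast
      have JC: "J \<subseteq> carrier G" using Jh MC by blast
      have "conjsub G J h = I \<longleftrightarrow> J = I"
      proof
        assume e: "conjsub G J h = I"
        have "J = conjsub G (conjsub G J h) (inv\<^bsub>G\<^esub> h)" using grp.conjsub_inv[OF JC hc] by simp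
        also have "\<dots> = conjsub G I (inv\<^bsub>G\<^esub> h)" using e by simp
        also have "\<dots> = I" using inM subgroup.m_inv_closed[OF M] Jh by blast
        finally show "J = I" .
      next
        assume "J = I" then show "conjsub G J h = I" using Jh inM by simp
      qed
      then show "a (conjsub G J h) = a J" unfolding a_def by simp
    qed
    show "\<forall>J. subgroup J G \<and> J \<subseteq> M \<longrightarrow> n J M dvd a J" unfolding a_def mM_def by simp
  qed
  have trP: "tr G (carrier G) M a \<in> P (carrier G)" by (rule tam_tr[OF TI cG M MC aP])
  have trI: "tr G (carrier G) M a I = mM"
  proof -
    define Cs where "Cs = {k <#\<^bsub>G\<^esub> M | k. k \<in> carrier G}"
    define f where "f = (\<lambda>C. let k = (SOME k. k \<in> C) in if conjsub G I k \<subseteq> M then a (conjsub G I k) else 0)"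
    have tr_eq: "tr G (carrier G) M a I = sum f Cs" unfolding tr_def f_def Cs_def using I IC by simp
    have "Cs \<subseteq> Pow (carrier G)" unfolding Cs_def using grp.l_coset_subset_G[OF MC] by blast
    then have fin: "finite Cs" using assms(2) finite_subset by blast
    have "\<one>\<^bsub>G\<^esub> <#\<^bsub>G\<^esub> M = M" by (rule grp.lcos_mult_one[OF MC])
    then have MCs: "M \<in> Cs" unfolding Cs_def by force
    have one: "\<one>\<^bsub>G\<^esub> \<in> M" by (rule subgroup.one_closed[OF M])
    have fM: "f M = mM"
    proof -
      have "(SOME k. k \<in> M) \<in> M" using one by (rule someI)
      then have "conjsub G I (SOME k. k \<in> M) = I" by (rule inM)
      then show ?thesis unfolding f_def Let_def a_def using IM by simp
    qed
    have f0: "f C = 0" if C: "C \<in> Cs - {M}" for C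
    proof -
      obtain k0 where k0: "k0 \<in> carrier G" "C = k0 <#\<^bsub>G\<^esub> M" using C unfolding Cs_def by blast
      have "k0 \<otimes>\<^bsub>G\<^esub> \<one>\<^bsub>G\<^esub> \<in> k0 <#\<^bsub>G\<^esub> M" unfolding l_coset_def using one by blast
      then have "k0 \<in> C" using k0 by simp
      then have kC: "(SOME k. k \<in> C) \<in> C" by (rule someI)
      define k where "k = (SOME k. k \<in> C)"
      obtain h0 where h0: "h0 \<in> M" "k = k0 \<otimes>\<^bsub>G\<^esub> h0" using kC k0(2) unfolding k_def l_coset_def by blast
      have h0c: "h0 \<in> carrier G" using h0 MC by blast
      have kc: "k \<in> carrier G" using h0 k0 h0c by simp
      have "conjsub G I k \<noteq> I"
      proof
        assume "conjsub G I k = I"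
        then have kM: "k \<in> M" unfolding M_def using kc by blast
        have "k0 = k \<otimes>\<^bsub>G\<^esub> inv\<^bsub>G\<^esub> h0" using h0 k0 h0c by (simp add: grp.m_assoc)
        moreover have "k \<otimes>\<^bsub>G\<^esub> inv\<^bsub>G\<^esub> h0 \<in> M"
          by (rule subgroup.m_closed[OF M kM subgroup.m_inv_closed[OF M h0(1)]])
        ultimately have "k0 \<in> M" by simp
        then have "C = M" using k0 grp.lcos_self[OF M] by simp
        then show False using C by blast
      qed
      then show ?thesis unfolding f_def Let_def a_def k_def[symmetric] by simp
    qed
    have "sum f Cs = f M + sum f (Cs - {M})" by (rule sum.remove[OF fin MCs])
    also have "sum f (Cs - {M}) = 0" by (rule sum.neutral) (use f0 in blast)
    finally show ?thesis using tr_eq fM by simp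
  qed
  have NmM: "N dvd mM"
  proof -
    have "n I (carrier G) dvd tr G (carrier G) M a I" by (rule Pdvd[OF cG trP I IC])
    then show ?thesis using trI N_def by simp
  qed
  define b where "b = (\<lambda>J. if J = I then t else 0)"
  have bP: "b \<in> P I"
  proof (rule Pin[OF I])
    show "b \<in> ghost G I" unfolding ghost_def
    proof (intro CollectI conjI allI impI)
      fix J assume "\<not> (subgroup J G \<and> J \<subseteq> I)"
      then show "b J = 0" unfolding b_def using I by auto
    next
      fix J h assume Jh: "subgroup J G \<and> J \<subseteq> I \<and> h \<in> I"
      have hc: "h \<in> carrier G" using Jh IC by blast
      have JC: "J \<subseteq> carrier G" using Jh IC by blast
      have "conjsub G J h = I \<longleftrightarrow> J = I"
      proof
        assume e: "conjsub G J h = I"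
        have "J = conjsub G (conjsub G J h) (inv\<^bsub>G\<^esub> h)" using grp.conjsub_inv[OF JC hc] by simp
        also have "\<dots> = conjsub G I (inv\<^bsub>G\<^esub> h)" using e by simp
        also have "\<dots> = I" using grp.conjsub_self[OF I subgroup.m_inv_closed[OF I]] Jh by blast
        finally show "J = I" .
      next
        assume "J = I" then show "conjsub G J h = I" using Jh grp.conjsub_self[OF I] by simp
      qed
      then show "b (conjsub G J h) = b J" unfolding b_def by simp
    qed
    show "\<forall>J. subgroup J G \<and> J \<subseteq> I \<longrightarrow> n J I dvd b J" unfolding b_def t_def by simp
  qed
  have nmP: "nm G M I b \<in> P M" by (rule tam_nm[OF TI M I IM bP])
  define Ds where "Ds = {I <#>\<^bsub>G\<^esub> (g <#\<^bsub>G\<^esub> I) | g. g \<in> M}"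
  have nmI: "nm G M I b I = t ^ card Ds"
  proof -
    have "nm G M I b I = (\<Prod>D \<in> Ds. b (conjsub G I (SOME g. g \<in> D) \<inter> I))"
      unfolding nm_def Ds_def using I IM by simp
    also have "\<dots> = (\<Prod>D \<in> Ds. t)"
    proof (rule prod.cong[OF refl])
      fix D assume "D \<in> Ds"
      then obtain g where g: "g \<in> M" "D = I <#>\<^bsub>G\<^esub> (g <#\<^bsub>G\<^esub> I)" unfolding Ds_def by blast
      have gc: "g \<in> carrier G" using g MC by blast
      have one': "\<one>\<^bsub>G\<^esub> \<in> I" by (rule subgroup.one_closed[OF I])
      have "\<one>\<^bsub>G\<^esub> \<otimes>\<^bsub>G\<^esub> (g \<otimes>\<^bsub>G\<^esub> \<one>\<^bsub>G\<^esub>) \<in> D"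
        unfolding g(2) set_mult_def l_coset_def using one' by blast
      then have "g \<in> D" using gc by simp
      then have sD: "(SOME g. g \<in> D) \<in> D" by (rule someI)
      then obtain i i' where ii: "i \<in> I" "i' \<in> I" "(SOME g. g \<in> D) = i \<otimes>\<^bsub>G\<^esub> (g \<otimes>\<^bsub>G\<^esub> i')"
        unfolding g(2) set_mult_def l_coset_def by blast
      have "i \<otimes>\<^bsub>G\<^esub> (g \<otimes>\<^bsub>G\<^esub> i') \<in> M"
        using ii IM g(1) subgroup.m_closed[OF M] by blast
      then have "conjsub G I (SOME g. g \<in> D) = I" using ii(3) inM by simp
      then show "b (conjsub G I (SOME g. g \<in> D) \<inter> I) = t" unfolding b_def by simp
    qed
    also have "\<dots> = t ^ card Ds" by simp
    finally show ?thesis .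
  qed
  have mMt: "mM dvd t ^ card Ds"
  proof -
    have "n I M dvd nm G M I b I" by (rule Pdvd[OF M nmP I IM])
    then show ?thesis using nmI mM_def by simp
  qed
  have "N dvd t ^ card Ds" using NmM mMt by (rule dvd_trans)
  moreover have "t ^ card Ds dvd t ^ (2 ^ card Ds)" by (rule le_imp_power_dvd) (simp add: less_imp_le)
  ultimately have "N dvd t ^ (2 ^ card Ds)" by (rule dvd_trans)
  then have Nt: "N dvd t" by (rule pw)
  have Nm: "N dvd m" using Nt tm by (rule dvd_trans)
  have mpos: "m \<ge> 0" unfolding m_def using assms(4) H I IsH by blast
  have Npos: "N \<ge> 0" unfolding N_def using assms(4) cG I IC by blast
  have "m = N" by (rule zdvd_antisym_nonneg[OF mpos Npos mN Nm])
  then show "n I H = n I (carrier G)" unfolding m_def N_def .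
qed

end
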